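(* If a closure model $\mathcal{M}=((X,\mathcal{C}_R),\mathcal{V})$ is quasi-discrete, finitely closed and finitely backward closed, then for all $x_1,x_2\in X$: $x_1\simeq x_2$ iff $x_1$ and $x_2$ satisfy exactly the same $\mathrm{SLCS}^-$ formulas.
   Context: $\mathcal{C}_R(A)=A\cup\{x\mid\exists a\in A.\ aRx\}$, $\vec{\mathcal{C}}(x)=\mathcal{C}_R(\{x\})$, $\overleftarrow{\mathcal{C}}(x)=\mathcal{C}_{R^{-1}}(\{x\})$, $\mathcal{V}:AP\to\mathcal{P}(X)$, $\mathcal{V}^{-1}(x)=\{p\mid x\in\mathcal{V}(p)\}$; finitely (backward) closed: all $\vec{\mathcal{C}}(x)$ (resp. $\overleftarrow{\mathcal{C}}(x)$) finite. Path: $\pi:\mathbb{N}\to X$ with $\pi[\mathcal{C}_{succ}(N)]\subseteq\mathcal{C}_R(\pi[N])$ for all $N$, $\mathcal{C}_{succ}$ based on $n\mapsto n+1$. $x\models\vec\rho\,\Phi_1[\Phi_2]$ iff some path $\pi$ and $\ell$ have $\pi(0)=x$, $\pi(\ell)\models\Phi_1$, $\pi(j)\models\Phi_2$ for $0<j<\ell$; $x\models\overleftarrow\rho\,\Phi_1[\Phi_2]$ iff some path $\pi$ and $\ell$ have $\pi(\ell)=x$, $\pi(0)\models\Phi_1$, $\pi(j)\models\Phi_2$ for $0<j<\ell$. $\bot=p\land\neg p$. $\mathrm{SLCS}^-$: $\Phi::=p\mid\neg\Phi\mid\Phi\lor\Phi\mid\vec\rho\,\Phi[\bot]\mid\overleftarrow\rho\,\Phi[\bot]$.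 $\simeq$: union of all non-empty equivalence relations $B$ with $(x_1,x_2)\in B\Rightarrow\mathcal{V}^{-1}(x_1)=\mathcal{V}^{-1}(x_2)$ and for all $C\in X/B$, $\vec{\mathcal{C}}(x_1)\cap C\neq\emptyset\iff\vec{\mathcal{C}}(x_2)\cap C\neq\emptyset$ and $\overleftarrow{\mathcal{C}}(x_1)\cap C\neq\emptyset\iff\overleftarrow{\mathcal{C}}(x_2)\cap C\neq\emptyset$. *)

theory Defs
  imports Main
begin

text \<open>Closure model based on a relation R on the carrier (the whole type 'a),
  with valuation V from atomic propositions 'p to sets of points.
  Such a model is quasi-discrete by construction.\<close>

definition clo :: "'a rel \<Rightarrow> 'a set \<Rightarrow> 'a set" where
  "clo R A = A \<union> {x. \<exists>a\<in>A. (a, x) \<in> R}"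

definition fclo :: "'a rel \<Rightarrow> 'a \<Rightarrow> 'a set" where
  "fclo R x = clo R {x}"

definition bclo :: "'a rel \<Rightarrow> 'a \<Rightarrow> 'a set" where
  "bclo R x = clo (R\<inverse>) {x}"

definition finitely_closed :: "'a rel \<Rightarrow> bool" where
  "finitely_closed R \<longleftrightarrow> (\<forall>x. finite (fclo R x))"

definition finitely_backward_closed :: "'a rel \<Rightarrow> bool" where
  "finitely_backward_closed R \<longleftrightarrow> (\<forall>x. finite (bclo R x))"

definition Vinv :: "('p \<Rightarrow> 'a set) \<Rightarrow> 'a \<Rightarrow> 'p set" where
  "Vinv V x = {p. x \<in> V p}"

definition succ_rel :: "nat rel" where
  "succ_rel = {(n, m). m = n + 1}"

definition is_path :: "'a rel \<Rightarrow> (nat \<Rightarrow> 'a) \<Rightarrow> bool" where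
  "is_path R \<pi> \<longleftrightarrow> (\<forall>N. \<pi> ` clo succ_rel N \<subseteq> clo R (\<pi> ` N))"

text \<open>SLCS^- formulas: p | not | or | forward rho Phi[bot] | backward rho Phi[bot].\<close>
datatype 'p slcs = Atom 'p | Neg "'p slcs" | Or "'p slcs" "'p slcs"
  | RhoF "'p slcs" | RhoB "'p slcs"

text \<open>Satisfaction. Since bot = p and not p is never satisfied, the
  condition "pi(j) satisfies bot for 0 < j < l" is written as False.\<close>
fun sat :: "'a rel \<Rightarrow> ('p \<Rightarrow> 'a set) \<Rightarrow> 'a \<Rightarrow> 'p slcs \<Rightarrow> bool" where
  "sat R V x (Atom p) = (x \<in> V p)"
| "sat R V x (Neg \<phi>) = (\<not> sat R V x \<phi>)"
| "sat R V x (Or \<phi> \<psi>) = (sat R V x \<phi> \<or> sat R V x \<psi>)"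
| "sat R V x (RhoF \<phi>) = (\<exists>\<pi> l. is_path R \<pi> \<and> \<pi> 0 = x \<and> sat R V (\<pi> l) \<phi>
        \<and> (\<forall>j. 0 < j \<and> j < l \<longrightarrow> False))"
| "sat R V x (RhoB \<phi>) = (\<exists>\<pi> l. is_path R \<pi> \<and> \<pi> l = x \<and> sat R V (\<pi> 0) \<phi>
        \<and> (\<forall>j. 0 < j \<and> j < l \<longrightarrow> False))"

definition is_bisim :: "'a rel \<Rightarrow> ('p \<Rightarrow> 'a set) \<Rightarrow> 'a rel \<Rightarrow> bool" where
  "is_bisim R V B \<longleftrightarrow> B \<noteq> {} \<and> equiv UNIV B \<and>
     (\<forall>(x1, x2) \<in> B. Vinv V x1 = Vinv V x2 \<and>
        (\<forall>C \<in> UNIV // B.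
           (fclo R x1 \<inter> C \<noteq> {} \<longleftrightarrow> fclo R x2 \<inter> C \<noteq> {}) \<and>
           (bclo R x1 \<inter> C \<noteq> {} \<longleftrightarrow> bclo R x2 \<inter> C \<noteq> {})))"

definition bisimilar :: "'a rel \<Rightarrow> ('p \<Rightarrow> 'a set) \<Rightarrow> 'a rel" where
  "bisimilar R V = \<Union>{B. is_bisim R V B}"

end

theory Submission
  imports Defs
begin

lemma path_step:
  assumes "is_path R \<pi>" shows "\<pi> (Suc n) = \<pi> n \<or> (\<pi> n, \<pi> (Suc n)) \<in> R"
proof -
  have "\<pi> ` clo succ_rel {n} \<subseteq> clo R (\<pi> ` {n})" using assms unfolding is_path_def by blast
  moreover have "Suc n \<in> clo succ_rel {n}" unfolding clo_def succ_rel_def by simp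
  ultimately have "\<pi> (Suc n) \<in> clo R {\<pi> n}" by auto
  then show ?thesis unfolding clo_def by auto
qed

lemma const_path: "is_path R (\<lambda>_. x)"
  unfolding is_path_def clo_def by auto

lemma two_path: assumes "(x, y) \<in> R" shows "is_path R (\<lambda>n. if n = 0 then x else y)"
  unfolding is_path_def clo_def succ_rel_def using assms
  by (auto simp: image_def)

lemma satF: "sat R V x (RhoF \<phi>) \<longleftrightarrow> (\<exists>y\<in>fclo R x. sat R V y \<phi>)"
proof
  assume "sat R V x (RhoF \<phi>)"
  then obtain \<pi> l where p: "is_path R \<pi>" "\<pi> 0 = x" "sat R V (\<pi> l) \<phi>" "\<forall>j. 0 < j \<and> j < l \<longrightarrow> False"
    by auto
  have "l = 0 \<or> l = 1" using p(4) by (metis One_nat_def less_one linorder_neqE_nat zero_less_one)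
  then show "\<exists>y\<in>fclo R x. sat R V y \<phi>"
  proof
    assume "l = 0" then show ?thesis using p unfolding fclo_def clo_def by auto
  next
    assume "l = 1"
    then have "\<pi> 1 = x \<or> (x, \<pi> 1) \<in> R" using path_step[OF p(1), of 0] p(2) by simp
    then show ?thesis using p \<open>l = 1\<close> unfolding fclo_def clo_def by auto
  qed
next
  assume "\<exists>y\<in>fclo R x. sat R V y \<phi>"
  then obtain y where y: "y \<in> fclo R x" "sat R V y \<phi>" by blast
  then have "y = x \<or> (x, y) \<in> R" unfolding fclo_def clo_def by auto
  then show "sat R V x (RhoF \<phi>)"
  proof
    assume "y = x" then show ?thesis using y const_path[of R x]
      by (simp only: sat.simps) (rule exI[of _ "\<lambda>_. x"], rule exI[of _ 0], auto)
  next
    assume r: "(x, y) \<in> R"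
    show ?thesis using y two_path[OF r]
      by (simp only: sat.simps) (rule exI[of _ "\<lambda>n. if n = 0 then x else y"], rule exI[of _ 1], auto)
  qed
qed

lemma satB: "sat R V x (RhoB \<phi>) \<longleftrightarrow> (\<exists>y\<in>bclo R x. sat R V y \<phi>)"
proof
  assume "sat R V x (RhoB \<phi>)"
  then obtain \<pi> l where p: "is_path R \<pi>" "\<pi> l = x" "sat R V (\<pi> 0) \<phi>" "\<forall>j. 0 < j \<and> j < l \<longrightarrow> False"
    by auto
  have "l = 0 \<or> l = 1" using p(4) by (metis One_nat_def less_one linorder_neqE_nat zero_less_one)
  then show "\<exists>y\<in>bclo R x. sat R V y \<phi>"
  proof
    assume "l = 0" then show ?thesis using p unfolding bclo_def clo_def by auto
  next
    assume "l = 1"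
    then have "x = \<pi> 0 \<or> (\<pi> 0, x) \<in> R" using path_step[OF p(1), of 0] p(2) by auto
    then show ?thesis using p \<open>l = 1\<close> unfolding bclo_def clo_def by auto
  qed
next
  assume "\<exists>y\<in>bclo R x. sat R V y \<phi>"
  then obtain y where y: "y \<in> bclo R x" "sat R V y \<phi>" by blast
  then have "y = x \<or> (y, x) \<in> R" unfolding bclo_def clo_def by auto
  then show "sat R V x (RhoB \<phi>)"
  proof
    assume "y = x" then show ?thesis using y const_path[of R x]
      by (simp only: sat.simps) (rule exI[of _ "\<lambda>_. x"], rule exI[of _ 0], auto)
  next
    assume r: "(y, x) \<in> R"
    show ?thesis using y two_path[OF r]
      by (simp only: sat.simps) (rule exI[of _ "\<lambda>n. if n = 0 then y else x"], rule exI[of _ 1], auto)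
  qed
qed



lemma bisim_all:
  assumes "is_bisim R V B" "(a, b) \<in> B"
  shows "Vinv V a = Vinv V b \<and> (\<forall>C \<in> UNIV // B.
           (fclo R a \<inter> C \<noteq> {} \<longleftrightarrow> fclo R b \<inter> C \<noteq> {}) \<and>
           (bclo R a \<inter> C \<noteq> {} \<longleftrightarrow> bclo R b \<inter> C \<noteq> {}))"
proof -
  have "\<forall>(x1, x2) \<in> B. Vinv V x1 = Vinv V x2 \<and> (\<forall>C \<in> UNIV // B.
           (fclo R x1 \<inter> C \<noteq> {} \<longleftrightarrow> fclo R x2 \<inter> C \<noteq> {}) \<and>
           (bclo R x1 \<inter> C \<noteq> {} \<longleftrightarrow> bclo R x2 \<inter> C \<noteq> {}))"
    using assms(1) unfolding is_bisim_def by (elim conjE)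
  from bspec[OF this assms(2)] show ?thesis unfolding case_prod_conv .
qed

lemma bisim_equiv: "is_bisim R V B \<Longrightarrow> equiv UNIV B"
  unfolding is_bisim_def by (elim conjE)

lemma bisimD:
  assumes "is_bisim R V B" "(a, b) \<in> B" "C \<in> UNIV // B"
  shows "(fclo R a \<inter> C \<noteq> {} \<longleftrightarrow> fclo R b \<inter> C \<noteq> {}) \<and>
         (bclo R a \<inter> C \<noteq> {} \<longleftrightarrow> bclo R b \<inter> C \<noteq> {})"
  using bisim_all[OF assms(1,2)] assms(3) by (elim conjE) (erule bspec)

lemma bisimI:
  assumes "B \<noteq> {}" "equiv UNIV B"
    "\<And>x1 x2. (x1, x2) \<in> B \<Longrightarrow> Vinv V x1 = Vinv V x2"
    "\<And>x1 x2 C. (x1, x2) \<in> B \<Longrightarrow> C \<in> UNIV // B \<Longrightarrow> fclo R x1 \<inter> C \<noteq> {} \<Longrightarrow> fclo R x2 \<inter> C \<noteq> {}"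
    "\<And>x1 x2 C. (x1, x2) \<in> B \<Longrightarrow> C \<in> UNIV // B \<Longrightarrow> bclo R x1 \<inter> C \<noteq> {} \<Longrightarrow> bclo R x2 \<inter> C \<noteq> {}"
    "\<And>x1 x2. (x1, x2) \<in> B \<Longrightarrow> (x2, x1) \<in> B"
  shows "is_bisim R V B"
proof -
  have "\<forall>(x1, x2) \<in> B. Vinv V x1 = Vinv V x2 \<and> (\<forall>C \<in> UNIV // B.
           (fclo R x1 \<inter> C \<noteq> {} \<longleftrightarrow> fclo R x2 \<inter> C \<noteq> {}) \<and>
           (bclo R x1 \<inter> C \<noteq> {} \<longleftrightarrow> bclo R x2 \<inter> C \<noteq> {}))"
  proof (intro ballI)
    fix p assume p: "p \<in> B"
    obtain x1 x2 where px: "p = (x1, x2)" by (cases p)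
    have h: "(x1, x2) \<in> B" using p px by simp
    have h2: "(x2, x1) \<in> B" using assms(6) h .
    have "Vinv V x1 = Vinv V x2 \<and> (\<forall>C \<in> UNIV // B.
           (fclo R x1 \<inter> C \<noteq> {} \<longleftrightarrow> fclo R x2 \<inter> C \<noteq> {}) \<and>
           (bclo R x1 \<inter> C \<noteq> {} \<longleftrightarrow> bclo R x2 \<inter> C \<noteq> {}))"
    proof (rule conjI)
      show "Vinv V x1 = Vinv V x2" using assms(3)[OF h] .
    next
      show "\<forall>C \<in> UNIV // B.
           (fclo R x1 \<inter> C \<noteq> {} \<longleftrightarrow> fclo R x2 \<inter> C \<noteq> {}) \<and>
           (bclo R x1 \<inter> C \<noteq> {} \<longleftrightarrow> bclo R x2 \<inter> C \<noteq> {})"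
      proof (rule ballI)
        fix C assume C: "C \<in> UNIV // B"
        have f: "fclo R x1 \<inter> C \<noteq> {} \<longleftrightarrow> fclo R x2 \<inter> C \<noteq> {}"
          using assms(4)[OF h C] assms(4)[OF h2 C] by (rule iffI)
        have g: "bclo R x1 \<inter> C \<noteq> {} \<longleftrightarrow> bclo R x2 \<inter> C \<noteq> {}"
          using assms(5)[OF h C] assms(5)[OF h2 C] by (rule iffI)
        show "(fclo R x1 \<inter> C \<noteq> {} \<longleftrightarrow> fclo R x2 \<inter> C \<noteq> {}) \<and>
           (bclo R x1 \<inter> C \<noteq> {} \<longleftrightarrow> bclo R x2 \<inter> C \<noteq> {})" using f g by (rule conjI)
      qed
    qed
    then have main: "Vinv V x1 = Vinv V x2 \<and> (\<forall>C \<in> UNIV // B.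
           (fclo R x1 \<inter> C \<noteq> {} \<longleftrightarrow> fclo R x2 \<inter> C \<noteq> {}) \<and>
           (bclo R x1 \<inter> C \<noteq> {} \<longleftrightarrow> bclo R x2 \<inter> C \<noteq> {}))" .
    show "case p of (x1, x2) \<Rightarrow> Vinv V x1 = Vinv V x2 \<and> (\<forall>C \<in> UNIV // B.
           (fclo R x1 \<inter> C \<noteq> {} \<longleftrightarrow> fclo R x2 \<inter> C \<noteq> {}) \<and>
           (bclo R x1 \<inter> C \<noteq> {} \<longleftrightarrow> bclo R x2 \<inter> C \<noteq> {}))" by (subst px, subst case_prod_conv, rule main)
  qed
  then show ?thesis unfolding is_bisim_def using assms(1,2) by (intro conjI)
qed

lemma bisim_sat:
  assumes B: "is_bisim R V B"
  shows "\<forall>a b. (a, b) \<in> B \<longrightarrow> (sat R V a \<phi> \<longleftrightarrow> sat R V b \<phi>)"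
proof (induction \<phi>)
  case (Atom p)
  show ?case
  proof (intro allI impI)
    fix a b assume "(a, b) \<in> B"
    then have "Vinv V a = Vinv V b" using bisim_all[OF B] by blast
    then have "(p \<in> Vinv V a) = (p \<in> Vinv V b)" by (rule arg_cong)
    then show "sat R V a (Atom p) = sat R V b (Atom p)" unfolding Vinv_def by simp
  qed
next
  case (Neg \<phi>) then show ?case by simp
next
  case (Or \<phi>1 \<phi>2) then show ?case by simp
next
  case (RhoF \<phi>)
  let ?f = "RhoF \<phi>"
  have eq: "equiv UNIV B" using bisim_equiv[OF B] .
  have key: "sat R V b (RhoF \<phi>)" if ab: "(a, b) \<in> B \<or> (b, a) \<in> B" and s: "sat R V a (RhoF \<phi>)" for a b
  proof -
    obtain y where y: "y \<in> fclo R a" "sat R V y \<phi>" using satF[THEN iffD1, OF s] by blast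
    let ?C = "B `` {y}"
    have C: "?C \<in> UNIV // B" by (simp add: quotientI)
    have "y \<in> ?C" using eq by (simp add: equiv_def refl_on_def)
    then have ne: "fclo R a \<inter> ?C \<noteq> {}" using y by blast
    have "fclo R b \<inter> ?C \<noteq> {}"
    proof (cases "(a, b) \<in> B")
      case True then show ?thesis using bisimD[OF B True C] ne by (elim conjE) (erule iffD1)
    next
      case False then have "(b, a) \<in> B" using ab by simp
      then show ?thesis using bisimD[OF B \<open>(b, a) \<in> B\<close> C] ne by (elim conjE) (erule iffD2)
    qed
    then obtain z where z: "z \<in> fclo R b" "(y, z) \<in> B" by blast
    then have "sat R V z \<phi>" using RhoF y by blast
    then show ?thesis by (intro satF[THEN iffD2] bexI[OF _ z(1)])
  qed
  have sym: "(a, b) \<in> B \<Longrightarrow> (b, a) \<in> B" for a b using eq by (meson equivE symE)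
  show ?case
  proof (intro allI impI iffI)
    fix a b assume ab: "(a, b) \<in> B"
    { assume s: "sat R V a ?f" then show "sat R V b ?f" by (rule key[OF disjI1[OF ab]]) }
    { assume s: "sat R V b ?f" then show "sat R V a ?f" by (rule key[OF disjI2[OF ab]]) }
  qed
next
  case (RhoB \<phi>)
  let ?f = "RhoB \<phi>"
  have eq: "equiv UNIV B" using bisim_equiv[OF B] .
  have key: "sat R V b (RhoB \<phi>)" if ab: "(a, b) \<in> B \<or> (b, a) \<in> B" and s: "sat R V a (RhoB \<phi>)" for a b
  proof -
    obtain y where y: "y \<in> bclo R a" "sat R V y \<phi>" using satB[THEN iffD1, OF s] by blast
    let ?C = "B `` {y}"
    have C: "?C \<in> UNIV // B" by (simp add: quotientI)
    have "y \<in> ?C" using eq by (simp add: equiv_def refl_on_def)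
    then have ne: "bclo R a \<inter> ?C \<noteq> {}" using y by blast
    have "bclo R b \<inter> ?C \<noteq> {}"
    proof (cases "(a, b) \<in> B")
      case True then show ?thesis using bisimD[OF B True C] ne by (elim conjE) (erule iffD1)
    next
      case False then have "(b, a) \<in> B" using ab by simp
      then show ?thesis using bisimD[OF B \<open>(b, a) \<in> B\<close> C] ne by (elim conjE) (erule iffD2)
    qed
    then obtain z where z: "z \<in> bclo R b" "(y, z) \<in> B" by blast
    then have "sat R V z \<phi>" using RhoB y by blast
    then show ?thesis by (intro satB[THEN iffD2] bexI[OF _ z(1)])
  qed
  have sym: "(a, b) \<in> B \<Longrightarrow> (b, a) \<in> B" for a b using eq by (meson equivE symE)
  show ?case
  proof (intro allI impI iffI)
    fix a b assume ab: "(a, b) \<in> B"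
    { assume s: "sat R V a ?f" then show "sat R V b ?f" by (rule key[OF disjI1[OF ab]]) }
    { assume s: "sat R V b ?f" then show "sat R V a ?f" by (rule key[OF disjI2[OF ab]]) }
  qed
qed

definition leq :: "'a rel \<Rightarrow> ('p \<Rightarrow> 'a set) \<Rightarrow> 'a rel" where
  "leq R V = {(a, b). \<forall>\<phi>. sat R V a \<phi> \<longleftrightarrow> sat R V b \<phi>}"

lemma distinguish:
  assumes "finite S" "\<forall>z\<in>S. (y, z) \<notin> leq R V"
  shows "\<exists>\<Psi>. sat R V y \<Psi> \<and> (\<forall>z\<in>S. \<not> sat R V z \<Psi>)"
  using assms
proof (induction S rule: finite_induct)
  case empty
  show ?case by (rule exI[of _ "Or (Atom undefined) (Neg (Atom undefined))"]) simp
next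
  case (insert z S)
  then obtain \<Psi> where P: "sat R V y \<Psi>" "\<forall>z\<in>S. \<not> sat R V z \<Psi>" by auto
  from insert have "(y, z) \<notin> leq R V" by auto
  then obtain \<phi> where "sat R V y \<phi> \<noteq> sat R V z \<phi>" unfolding leq_def by auto
  then obtain \<chi> where X: "sat R V y \<chi>" "\<not> sat R V z \<chi>"
  proof (cases "sat R V y \<phi>")
    case True then show ?thesis using that \<open>sat R V y \<phi> \<noteq> sat R V z \<phi>\<close> by blast
  next
    case False then show ?thesis using that[of "Neg \<phi>"] \<open>sat R V y \<phi> \<noteq> sat R V z \<phi>\<close> by simp
  qed
  show ?case
    by (rule exI[of _ "Neg (Or (Neg \<Psi>) (Neg \<chi>))"]) (use P X in auto)
qed

lemma equiv_leq: "equiv UNIV (leq R V)"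
  unfolding equiv_def refl_on_def sym_def trans_def leq_def by auto

lemma leq_F:
  assumes fin: "finitely_closed R" and ab: "(a, b) \<in> leq R V" and y: "y \<in> fclo R a"
  shows "\<exists>z\<in>fclo R b. (y, z) \<in> leq R V"
proof (rule ccontr)
  assume "\<not> ?thesis"
  then have n: "\<forall>z\<in>fclo R b. (y, z) \<notin> leq R V" by blast
  have fi: "finite (fclo R b)" using fin unfolding finitely_closed_def by blast
  obtain \<Psi> where P: "sat R V y \<Psi>" "\<forall>z\<in>fclo R b. \<not> sat R V z \<Psi>"
    using distinguish[OF fi n] by blast
  have sa: "sat R V a (RhoF \<Psi>)" by (rule satF[THEN iffD2], rule bexI[of _ y], rule P(1), rule y)
  have e: "\<forall>\<phi>. sat R V a \<phi> = sat R V b \<phi>" using ab unfolding leq_def by simp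
  have sb: "sat R V b (RhoF \<Psi>)" using spec[OF e, of "RhoF \<Psi>"] sa by (rule iffD1)
  obtain w where w: "w \<in> fclo R b" "sat R V w \<Psi>" using satF[THEN iffD1, OF sb] by blast
  from bspec[OF P(2) w(1)] w(2) show False by (rule notE)
qed

lemma leq_B:
  assumes fin: "finitely_backward_closed R" and ab: "(a, b) \<in> leq R V" and y: "y \<in> bclo R a"
  shows "\<exists>z\<in>bclo R b. (y, z) \<in> leq R V"
proof (rule ccontr)
  assume "\<not> ?thesis"
  then have n: "\<forall>z\<in>bclo R b. (y, z) \<notin> leq R V" by blast
  have fi: "finite (bclo R b)" using fin unfolding finitely_backward_closed_def by blast
  obtain \<Psi> where P: "sat R V y \<Psi>" "\<forall>z\<in>bclo R b. \<not> sat R V z \<Psi>"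
    using distinguish[OF fi n] by blast
  have sa: "sat R V a (RhoB \<Psi>)" by (rule satB[THEN iffD2], rule bexI[of _ y], rule P(1), rule y)
  have e: "\<forall>\<phi>. sat R V a \<phi> = sat R V b \<phi>" using ab unfolding leq_def by simp
  have sb: "sat R V b (RhoB \<Psi>)" using spec[OF e, of "RhoB \<Psi>"] sa by (rule iffD1)
  obtain w where w: "w \<in> bclo R b" "sat R V w \<Psi>" using satB[THEN iffD1, OF sb] by blast
  from bspec[OF P(2) w(1)] w(2) show False by (rule notE)
qed

lemma leq_bisim:
  assumes f1: "finitely_closed R" and f2: "finitely_backward_closed R"
  shows "is_bisim R V (leq R V)"
proof -
  let ?L = "leq R V"
  have eq: "equiv UNIV ?L" by (rule equiv_leq)
  have tr: "(a, b) \<in> ?L \<Longrightarrow> (b, c) \<in> ?L \<Longrightarrow> (a, c) \<in> ?L" for a b c unfolding leq_def by auto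
  have sy: "(a, b) \<in> ?L \<Longrightarrow> (b, a) \<in> ?L" for a b unfolding leq_def by auto
  have classF: "fclo R b \<inter> C \<noteq> {}" if ab: "(a, b) \<in> ?L" and C: "C \<in> UNIV // ?L"
      and ne: "fclo R a \<inter> C \<noteq> {}" for a b C
  proof -
    obtain c where c: "C = ?L `` {c}" using C by (auto elim: quotientE)
    obtain y where y: "y \<in> fclo R a" "(c, y) \<in> ?L" using ne c by auto
    obtain z where z: "z \<in> fclo R b" "(y, z) \<in> ?L" using leq_F[OF f1 ab y(1)] by blast
    have "(c, z) \<in> ?L" using tr y(2) z(2) by blast
    then show ?thesis using z c by auto
  qed
  have classB: "bclo R b \<inter> C \<noteq> {}" if ab: "(a, b) \<in> ?L" and C: "C \<in> UNIV // ?L"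
      and ne: "bclo R a \<inter> C \<noteq> {}" for a b C
  proof -
    obtain c where c: "C = ?L `` {c}" using C by (auto elim: quotientE)
    obtain y where y: "y \<in> bclo R a" "(c, y) \<in> ?L" using ne c by auto
    obtain z where z: "z \<in> bclo R b" "(y, z) \<in> ?L" using leq_B[OF f2 ab y(1)] by blast
    have "(c, z) \<in> ?L" using tr y(2) z(2) by blast
    then show ?thesis using z c by auto
  qed
  have atoms: "(a, b) \<in> ?L \<Longrightarrow> Vinv V a = Vinv V b" for a b
  proof -
    assume "(a, b) \<in> ?L"
    then have "\<And>p. sat R V a (Atom p) = sat R V b (Atom p)" unfolding leq_def by blast
    then show "Vinv V a = Vinv V b" unfolding Vinv_def by auto
  qed
  have "?L \<noteq> {}" using eq by (auto simp: equiv_def refl_on_def)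
  then show ?thesis by (rule bisimI[OF _ eq atoms classF classB sy])
qed

theorem theorem3:
  fixes R :: "'a rel" and V :: "'p \<Rightarrow> 'a set"
  assumes "finitely_closed R" and "finitely_backward_closed R"
  shows "(x1, x2) \<in> bisimilar R V \<longleftrightarrow> (\<forall>\<phi>. sat R V x1 \<phi> \<longleftrightarrow> sat R V x2 \<phi>)"
proof
  assume "(x1, x2) \<in> bisimilar R V"
  then obtain B where "is_bisim R V B" "(x1, x2) \<in> B" unfolding bisimilar_def by blast
  then show "\<forall>\<phi>. sat R V x1 \<phi> \<longleftrightarrow> sat R V x2 \<phi>" using bisim_sat by blast
next
  assume "\<forall>\<phi>. sat R V x1 \<phi> \<longleftrightarrow> sat R V x2 \<phi>"
  then have "(x1, x2) \<in> leq R V" unfolding leq_def by blast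
  then show "(x1, x2) \<in> bisimilar R V" using leq_bisim[OF assms, of V] unfolding bisimilar_def by blast
qed

end
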